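(* Let $\mathfrak g$ and the infinite quiver $Q(\mathfrak g)$ be as in the context. Let $\mathbb C(\tau)$ be the field of rational functions in variables $\tau_i(n)$ ($i\in S$, $n\in d\mathbb Z$), and put $T_i(n)=\prod_{j<i}\prod_{k=1}^{-C_{ij}}\tau_j(n+kd_{ij})\cdot\prod_{j>i}\prod_{k=0}^{-C_{ij}-1}\tau_j(n+kd_{ij})$ with $d_{ij}=\min(d_i,d_j)$, $s_i(n)=\dfrac{T_i(n)}{\tau_i(n)\tau_i(n+d_i)}$. Let $p_\tau:\mathbb C(\mathbf X)\to\mathbb C(\tau)$ be the field homomorphism $X^i_n\mapsto s_i(n)/s_i(n+d_i)$, let $\phi:\mathbb C(\tau)\to\mathbb C(\mathbf A)$ be the field homomorphism $\tau_i(n)\mapsto A^i_{n-d_i}$, and let $p^\ast:\mathbb C(\mathbf X)\to\mathbb C(\mathbf A)$ be $p^\ast(X^i_n)=\prod_{v^j_k}(A^j_k)^{\varepsilon_{v^i_n,v^j_k}}$ (product over the vertices of $Q(\mathfrak g)$). Then $\phi\circ p_\tau=p^\ast$.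
   Context: Let $\mathfrak g$ be a finite-dimensional complex simple Lie algebra of rank $\ell$, $S=\{1,\dots,\ell\}$, of type $A_\ell$, $B_\ell$, $C_\ell$, $D_\ell$ ($\ell\ge4$), $E_{6,7,8}$, $F_4$ or $G_2$, labelled: $A_\ell,B_\ell,C_\ell$ chain $1-\cdots-\ell$ ($\alpha_\ell$ short in $B_\ell$, long in $C_\ell$); $D_\ell$: chain $1-\cdots-(\ell-1)$ plus edge $(\ell-2)-\ell$; $E_\ell$: chain $1-2-3-5-\cdots-\ell$ plus edge $3-4$; $F_4$: chain $1-2-3-4$, $\alpha_1,\alpha_2$ long; $G_2$: $\alpha_2$ long. $d_i=(\alpha_i,\alpha_i)/2$: $1$ in types $A,D,E$; $(1,\dots,1,\frac12)$ for $B_\ell$; $(1,\dots,1,2)$ for $C_\ell$; $(1,1,\frac12,\frac12)$ for $F_4$; $(1,3)$ for $G_2$; $d=\min d_i$; $C_{ij}=2(\alpha_i,\alpha_j)/(\alpha_i,\alpha_i)$. Quiver $Q(\mathfrak g)$ on $\{v^i_n: i\in S, n\in d\mathbb Z\}$, arrows for all $n$: (simply-laced) orient Dynkin edges from larger to smaller label ($C(\mathfrak g)$); $v^i_n\to v^i_{n+1}$, and for each $i\to j$ in $C(\mathfrak g)$, $v^i_n\to v^j_n$ and $v^j_{n+1}\to v^i_n$. ($B_\ell$) $v^i_n\to v^i_{n+1}$ ($i\le\ell-1$); $v^i_n\to v^{i-1}_n$, $v^{i-1}_{n+1}\to v^i_n$ ($2\le i\le\ell-1$); $v^\ell_n\to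 v^\ell_{n+1/2}$, $v^\ell_n\to v^{\ell-1}_{n-1/2}$, $v^{\ell-1}_{n+1/2}\to v^\ell_n$. ($C_\ell$) $v^i_n\to v^i_{n+1}$ ($i\le\ell-1$); $v^i_n\to v^{i-1}_n$, $v^{i-1}_{n+1}\to v^i_n$ ($2\le i\le\ell-1$); $v^\ell_n\to v^\ell_{n+2}$, $v^\ell_n\to v^{\ell-1}_n$, $v^{\ell-1}_{n+2}\to v^\ell_n$. ($F_4$) $v^i_n\to v^i_{n+1}$ ($i=1,2$); $v^2_n\to v^1_n$, $v^1_{n+1}\to v^2_n$; $v^3_n\to v^3_{n+1/2}$, $v^3_n\to v^2_{n-1/2}$, $v^2_{n+1/2}\to v^3_n$; $v^4_n\to v^4_{n+1/2}$, $v^4_n\to v^3_n$, $v^3_{n+1/2}\to v^4_n$. ($G_2$) $v^1_n\to v^1_{n+1}$, $v^2_n\to v^2_{n+3}$, $v^2_n\to v^1_n$, $v^1_{n+3}\to v^2_n$. Exchange matrix $\varepsilon_{uv}=\#\{u\to v\}-\#\{v\to u\}$. $\mathbb C(\mathbf X)$ and $\mathbb C(\mathbf A)$ are the fields of rational functions in the $X$-variables $X^i_n$ and $A$-variables $A^i_n$ attached to the vertices $v^i_n$. (The $\tau_i(n)$ are the $\tau$-functions of the lattice $\mathfrak g$-Toda field equation, i.e. solutions of $D_t\tau_i(n)\cdot\tau_i(n+d_i)=T_i(n)$, but the statement is an identity of field homomorphisms.) *)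

theory Defs
  imports Complex_Main
begin

datatype lie_type = TA nat | TB nat | TC nat | TD nat | TE nat | TF4 | TG2

fun rank :: "lie_type \<Rightarrow> nat" where
  "rank (TA l) = l" | "rank (TB l) = l" | "rank (TC l) = l" | "rank (TD l) = l"
| "rank (TE l) = l" | "rank TF4 = 4" | "rank TG2 = 2"

fun valid_type :: "lie_type \<Rightarrow> bool" where
  "valid_type (TA l) = (l \<ge> 1)"
| "valid_type (TB l) = (l \<ge> 2)"
| "valid_type (TC l) = (l \<ge> 2)"
| "valid_type (TD l) = (l \<ge> 4)"
| "valid_type (TE l) = (l \<in> {6,7,8})"
| "valid_type TF4 = True"
| "valid_type TG2 = True"

definition Sset :: "lie_type \<Rightarrow> nat set" where
  "Sset g = {1..rank g}"

text \<open>Unordered Dynkin edges with the labelling of the paper.\<close>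
fun dynkin_adj :: "lie_type \<Rightarrow> nat \<Rightarrow> nat \<Rightarrow> bool" where
  "dynkin_adj (TD l) a b =
     (let x = min a b; y = max a b in (y = x + 1 \<and> y \<le> l - 1) \<or> (x = l - 2 \<and> y = l))"
| "dynkin_adj (TE l) a b =
     (let x = min a b; y = max a b in
        (x, y) \<in> {(1,2),(2,3),(3,5),(3,4)} \<or> (x \<ge> 5 \<and> y = x + 1 \<and> y \<le> l))"
| "dynkin_adj g a b =
     (let x = min a b; y = max a b in y = x + 1 \<and> 1 \<le> x \<and> y \<le> rank g)"

text \<open>\<open>d_i = (\<alpha>_i,\<alpha>_i)/2\<close>.\<close>
fun dd :: "lie_type \<Rightarrow> nat \<Rightarrow> rat" where
  "dd (TB l) i = (if i = l then 1/2 else 1)"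
| "dd (TC l) i = (if i = l then 2 else 1)"
| "dd TF4 i = (if i \<le> 2 then 1 else 1/2)"
| "dd TG2 i = (if i = 1 then 1 else 3)"
| "dd g i = 1"

definition dmin :: "lie_type \<Rightarrow> rat" where
  "dmin g = Min (dd g ` Sset g)"

definition dZ :: "lie_type \<Rightarrow> rat set" where
  "dZ g = {of_int m * dmin g | m. True}"

definition root_ip :: "lie_type \<Rightarrow> nat \<Rightarrow> nat \<Rightarrow> rat" where
  "root_ip g i j =
     (if i = j then 2 * dd g i
      else if dynkin_adj g i j then - max (dd g i) (dd g j) else 0)"

definition cartan :: "lie_type \<Rightarrow> nat \<Rightarrow> nat \<Rightarrow> rat" where
  "cartan g i j = 2 * root_ip g i j / root_ip g i i"

definition dij :: "lie_type \<Rightarrow> nat \<Rightarrow> nat \<Rightarrow> rat" where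
  "dij g i j = min (dd g i) (dd g j)"

text \<open>Number of arrows \<open>v^a_p \<rightarrow> v^b_q\<close> in the quiver \<open>Q(g)\<close> (before restricting to vertices);
  each summand is one family of arrows listed in the paper.\<close>
fun arrows_raw :: "lie_type \<Rightarrow> nat \<Rightarrow> rat \<Rightarrow> nat \<Rightarrow> rat \<Rightarrow> nat" where
  "arrows_raw (TB l) a p b q =
     of_bool (a \<le> l - 1 \<and> b = a \<and> q = p + 1)
   + of_bool (2 \<le> a \<and> a \<le> l - 1 \<and> b = a - 1 \<and> q = p)
   + of_bool (2 \<le> b \<and> b \<le> l - 1 \<and> a = b - 1 \<and> p = q + 1)
   + of_bool (a = l \<and> b = l \<and> q = p + 1/2)
   + of_bool (a = l \<and> b = l - 1 \<and> q = p - 1/2)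
   + of_bool (a = l - 1 \<and> b = l \<and> p = q + 1/2)"
| "arrows_raw (TC l) a p b q =
     of_bool (a \<le> l - 1 \<and> b = a \<and> q = p + 1)
   + of_bool (2 \<le> a \<and> a \<le> l - 1 \<and> b = a - 1 \<and> q = p)
   + of_bool (2 \<le> b \<and> b \<le> l - 1 \<and> a = b - 1 \<and> p = q + 1)
   + of_bool (a = l \<and> b = l \<and> q = p + 2)
   + of_bool (a = l \<and> b = l - 1 \<and> q = p)
   + of_bool (a = l - 1 \<and> b = l \<and> p = q + 2)"
| "arrows_raw TF4 a p b q =
     of_bool (a \<in> {1,2} \<and> b = a \<and> q = p + 1)
   + of_bool (a = 2 \<and> b = 1 \<and> q = p)
   + of_bool (a = 1 \<and> b = 2 \<and> p = q + 1)
   + of_bool (a = 3 \<and> b = 3 \<and> q = p + 1/2)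
   + of_bool (a = 3 \<and> b = 2 \<and> q = p - 1/2)
   + of_bool (a = 2 \<and> b = 3 \<and> p = q + 1/2)
   + of_bool (a = 4 \<and> b = 4 \<and> q = p + 1/2)
   + of_bool (a = 4 \<and> b = 3 \<and> q = p)
   + of_bool (a = 3 \<and> b = 4 \<and> p = q + 1/2)"
| "arrows_raw TG2 a p b q =
     of_bool (a = 1 \<and> b = 1 \<and> q = p + 1)
   + of_bool (a = 2 \<and> b = 2 \<and> q = p + 3)
   + of_bool (a = 2 \<and> b = 1 \<and> q = p)
   + of_bool (a = 1 \<and> b = 2 \<and> p = q + 3)"
| "arrows_raw g a p b q =
     \<comment> \<open>simply-laced: Dynkin edges oriented from larger to smaller label\<close>
     of_bool (b = a \<and> q = p + 1)
   + of_bool (dynkin_adj g a b \<and> a > b \<and> q = p)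
   + of_bool (dynkin_adj g a b \<and> b > a \<and> p = q + 1)"

definition vertices :: "lie_type \<Rightarrow> (nat \<times> rat) set" where
  "vertices g = {(i, n). i \<in> Sset g \<and> n \<in> dZ g}"

definition arrows :: "lie_type \<Rightarrow> nat \<times> rat \<Rightarrow> nat \<times> rat \<Rightarrow> nat" where
  "arrows g u v =
     (if u \<in> vertices g \<and> v \<in> vertices g
      then arrows_raw g (fst u) (snd u) (fst v) (snd v) else 0)"

definition eps :: "lie_type \<Rightarrow> nat \<times> rat \<Rightarrow> nat \<times> rat \<Rightarrow> int" where
  "eps g u v = int (arrows g u v) - int (arrows g v u)"

definition Tfun :: "lie_type \<Rightarrow> (nat \<Rightarrow> rat \<Rightarrow> 'a::field) \<Rightarrow> nat \<Rightarrow> rat \<Rightarrow> 'a" where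
  "Tfun g \<tau> i n =
     (\<Prod>j\<in>{j\<in>Sset g. j < i}. \<Prod>k\<in>{k::nat. 1 \<le> k \<and> of_nat k \<le> - cartan g i j}.
         \<tau> j (n + of_nat k * dij g i j))
   * (\<Prod>j\<in>{j\<in>Sset g. j > i}. \<Prod>k\<in>{k::nat. of_nat k \<le> - cartan g i j - 1}.
         \<tau> j (n + of_nat k * dij g i j))"

definition sfun :: "lie_type \<Rightarrow> (nat \<Rightarrow> rat \<Rightarrow> 'a::field) \<Rightarrow> nat \<Rightarrow> rat \<Rightarrow> 'a" where
  "sfun g \<tau> i n = Tfun g \<tau> i n / (\<tau> i n * \<tau> i (n + dd g i))"

definition p_tau :: "lie_type \<Rightarrow> (nat \<Rightarrow> rat \<Rightarrow> 'a::field) \<Rightarrow> nat \<Rightarrow> rat \<Rightarrow> 'a" where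
  "p_tau g \<tau> i n = sfun g \<tau> i n / sfun g \<tau> i (n + dd g i)"

definition phi_subst :: "lie_type \<Rightarrow> (nat \<Rightarrow> rat \<Rightarrow> 'a) \<Rightarrow> nat \<Rightarrow> rat \<Rightarrow> 'a" where
  "phi_subst g A i n = A i (n - dd g i)"

definition p_star :: "lie_type \<Rightarrow> (nat \<Rightarrow> rat \<Rightarrow> 'a::field) \<Rightarrow> nat \<Rightarrow> rat \<Rightarrow> 'a" where
  "p_star g A i n =
     (\<Prod>v\<in>{v\<in>vertices g. eps g (i, n) v \<noteq> 0}. A (fst v) (snd v) powi eps g (i, n) v)"

end

theory Submission
  imports Defs
begin


definition PP :: "(nat \<times> rat \<Rightarrow> 'a::field) \<Rightarrow> (nat \<times> rat \<Rightarrow> int) \<Rightarrow> 'a" where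
  "PP A f = (\<Prod>v\<in>{v. f v \<noteq> 0}. A v powi f v)"

definition dl :: "nat \<times> rat \<Rightarrow> nat \<times> rat \<Rightarrow> int" where
  "dl w v = (if v = w then 1 else 0)"

lemma PP_superset:
  assumes "finite S" "{v. f v \<noteq> 0} \<subseteq> S"
  shows "PP A f = (\<Prod>v\<in>S. A v powi f v)"
  unfolding PP_def
  by (rule prod.mono_neutral_left) (use assms in auto)

lemma PP_add:
  assumes nz: "\<forall>v. A v \<noteq> 0" and f: "finite {v. f v \<noteq> 0}" and h: "finite {v. h v \<noteq> 0}"
  shows "PP A (\<lambda>v. f v + h v) = PP A f * PP A h"
proof -
  let ?S = "{v. f v \<noteq> 0} \<union> {v. h v \<noteq> 0}"
  have fin: "finite ?S" using f h by auto
  have "PP A (\<lambda>v. f v + h v) = (\<Prod>v\<in>?S. A v powi (f v + h v))"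
    by (rule PP_superset[OF fin]) auto
  also have "\<dots> = (\<Prod>v\<in>?S. A v powi f v * A v powi h v)"
    by (intro prod.cong refl power_int_add) (use nz in auto)
  also have "\<dots> = (\<Prod>v\<in>?S. A v powi f v) * (\<Prod>v\<in>?S. A v powi h v)"
    by (rule prod.distrib)
  also have "\<dots> = PP A f * PP A h"
    by (subst (1 2) PP_superset[OF fin]) auto
  finally show ?thesis .
qed

lemma PP_diff:
  assumes nz: "\<forall>v. A v \<noteq> 0" and f: "finite {v. f v \<noteq> 0}" and h: "finite {v. h v \<noteq> 0}"
  shows "PP A (\<lambda>v. f v - h v) = PP A f / PP A h"
proof -
  let ?S = "{v. f v \<noteq> 0} \<union> {v. h v \<noteq> 0}"
  have fin: "finite ?S" using f h by auto
  have "PP A (\<lambda>v. f v - h v) = (\<Prod>v\<in>?S. A v powi (f v - h v))"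
    by (rule PP_superset[OF fin]) auto
  also have "\<dots> = (\<Prod>v\<in>?S. A v powi f v / A v powi h v)"
    by (intro prod.cong refl power_int_diff) (use nz in auto)
  also have "\<dots> = (\<Prod>v\<in>?S. A v powi f v) / (\<Prod>v\<in>?S. A v powi h v)"
    by (rule prod_dividef)
  also have "\<dots> = PP A f / PP A h"
    by (subst (1 2) PP_superset[OF fin]) auto
  finally show ?thesis .
qed

lemma fin_add: "finite {v. f v \<noteq> 0} \<Longrightarrow> finite {v. h v \<noteq> 0} \<Longrightarrow> finite {v. f v + h v \<noteq> (0::int)}"
  by (rule finite_subset[of _ "{v. f v \<noteq> 0} \<union> {v. h v \<noteq> 0}"]) auto
lemma fin_diff: "finite {v. f v \<noteq> 0} \<Longrightarrow> finite {v. h v \<noteq> 0} \<Longrightarrow> finite {v. f v - h v \<noteq> (0::int)}"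
  by (rule finite_subset[of _ "{v. f v \<noteq> 0} \<union> {v. h v \<noteq> 0}"]) auto
lemma fin_dl: "finite {v. dl w v \<noteq> 0}"
  by (rule finite_subset[of _ "{w}"]) (auto simp: dl_def)
lemma fin_sum:
  assumes "finite K" "\<forall>k\<in>K. finite {v. f k v \<noteq> 0}"
  shows "finite {v. (\<Sum>k\<in>K. f k v) \<noteq> (0::int)}"
  by (rule finite_subset[of _ "\<Union>k\<in>K. {v. f k v \<noteq> 0}"]) (use assms in \<open>auto elim: sum.not_neutral_contains_not_neutral\<close>)

lemma PP_sum:
  assumes nz: "\<forall>v. A v \<noteq> 0" and K: "finite K" and f: "\<forall>k\<in>K. finite {v. f k v \<noteq> 0}"
  shows "PP A (\<lambda>v. \<Sum>k\<in>K. f k v) = (\<Prod>k\<in>K. PP A (f k))"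
  using K f
proof (induction K rule: finite_induct)
  case empty then show ?case by (simp add: PP_def)
next
  case (insert x F)
  have "PP A (\<lambda>v. \<Sum>k\<in>insert x F. f k v) = PP A (\<lambda>v. f x v + (\<Sum>k\<in>F. f k v))"
    using insert by simp
  also have "\<dots> = PP A (f x) * PP A (\<lambda>v. \<Sum>k\<in>F. f k v)"
    by (rule PP_add[OF nz]) (use insert in \<open>auto intro!: fin_sum\<close>)
  finally show ?case using insert by simp
qed

lemma PP_dl: "PP A (dl w) = A w"
  by (subst PP_superset[of "{w}"]) (auto simp: dl_def)

definition K1 :: "lie_type \<Rightarrow> nat \<Rightarrow> nat \<Rightarrow> nat set" where
  "K1 g i j = {k::nat. 1 \<le> k \<and> of_nat k \<le> - cartan g i j}"
definition K2 :: "lie_type \<Rightarrow> nat \<Rightarrow> nat \<Rightarrow> nat set" where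
  "K2 g i j = {k::nat. of_nat k \<le> - cartan g i j - 1}"

lemma nat_le_ceil: "rat_of_nat x \<le> c \<Longrightarrow> x \<le> nat \<lceil>c\<rceil>"
proof -
  assume "rat_of_nat x \<le> c"
  then have "\<lceil>rat_of_nat x\<rceil> \<le> \<lceil>c\<rceil>" by (rule ceiling_mono)
  then have "int x \<le> \<lceil>c\<rceil>" by simp
  then show ?thesis by linarith
qed

lemma fin_K1: "finite (K1 g i j)"
  unfolding K1_def
  by (rule finite_subset[of _ "{..nat \<lceil>- cartan g i j\<rceil>}"]) (auto intro: nat_le_ceil)
lemma fin_K2: "finite (K2 g i j)"
  unfolding K2_def
  by (rule finite_subset[of _ "{..nat \<lceil>- cartan g i j\<rceil>}"]) (auto intro: nat_le_ceil)

definition Rv :: "lie_type \<Rightarrow> nat \<Rightarrow> rat \<Rightarrow> nat \<times> rat \<Rightarrow> int" where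
  "Rv g i n v = dl (i, n + dd g i) v - dl (i, n - dd g i) v
    + (\<Sum>j\<in>{j\<in>Sset g. j < i}. \<Sum>k\<in>K1 g i j.
         dl (j, n + of_nat k * dij g i j - dd g j) v - dl (j, n + dd g i + of_nat k * dij g i j - dd g j) v)
    + (\<Sum>j\<in>{j\<in>Sset g. j > i}. \<Sum>k\<in>K2 g i j.
         dl (j, n + of_nat k * dij g i j - dd g j) v - dl (j, n + dd g i + of_nat k * dij g i j - dd g j) v)"

lemma fin_Sset: "finite {j\<in>Sset g. P j}"
  by (simp add: Sset_def)

lemma PP_Rv:
  assumes nz: "\<forall>v. A v \<noteq> 0"
  shows "PP A (Rv g i n) = A (i, n + dd g i) / A (i, n - dd g i)
    * ((\<Prod>j\<in>{j\<in>Sset g. j < i}. \<Prod>k\<in>K1 g i j. A (j, n + of_nat k * dij g i j - dd g j))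
       / (\<Prod>j\<in>{j\<in>Sset g. j < i}. \<Prod>k\<in>K1 g i j. A (j, n + dd g i + of_nat k * dij g i j - dd g j)))
    * ((\<Prod>j\<in>{j\<in>Sset g. j > i}. \<Prod>k\<in>K2 g i j. A (j, n + of_nat k * dij g i j - dd g j))
       / (\<Prod>j\<in>{j\<in>Sset g. j > i}. \<Prod>k\<in>K2 g i j. A (j, n + dd g i + of_nat k * dij g i j - dd g j)))"
proof -
  note fins = fin_dl fin_diff fin_add fin_sum fin_K1 fin_K2 fin_Sset
  have inner: "PP A (\<lambda>v. \<Sum>j\<in>{j\<in>Sset g. P j}. \<Sum>k\<in>K j. dl (a j k) v - dl (b j k) v)
     = (\<Prod>j\<in>{j\<in>Sset g. P j}. \<Prod>k\<in>K j. A (a j k)) / (\<Prod>j\<in>{j\<in>Sset g. P j}. \<Prod>k\<in>K j. A (b j k))"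
    if K: "\<And>j. finite (K j)" for P K a b
  proof -
    have "PP A (\<lambda>v. \<Sum>j\<in>{j\<in>Sset g. P j}. \<Sum>k\<in>K j. dl (a j k) v - dl (b j k) v)
        = (\<Prod>j\<in>{j\<in>Sset g. P j}. PP A (\<lambda>v. \<Sum>k\<in>K j. dl (a j k) v - dl (b j k) v))"
      by (rule PP_sum[OF nz fin_Sset]) (auto intro!: fins K)
    also have "\<dots> = (\<Prod>j\<in>{j\<in>Sset g. P j}. \<Prod>k\<in>K j. A (a j k) / A (b j k))"
      apply (intro prod.cong refl, subst PP_sum[OF nz K])
       apply (intro ballI fin_diff fin_dl)
      apply (intro prod.cong refl, subst PP_diff[OF nz fin_dl fin_dl])
      apply (simp add: PP_dl)
      done
    also have "\<dots> = (\<Prod>j\<in>{j\<in>Sset g. P j}. \<Prod>k\<in>K j. A (a j k)) / (\<Prod>j\<in>{j\<in>Sset g. P j}. \<Prod>k\<in>K j. A (b j k))"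
      by (simp add: prod_dividef)
    finally show ?thesis .
  qed
  have finI: "finite {v. (\<Sum>j\<in>{j\<in>Sset g. P j}. \<Sum>k\<in>K j. dl (a j k) v - dl (b j k) v) \<noteq> 0}"
    if K: "\<And>j. finite (K j)" for P K a b
    by (intro fin_sum fin_Sset ballI fin_diff fin_dl K)
  let ?F3 = "\<lambda>v. \<Sum>j\<in>{j\<in>Sset g. j < i}. \<Sum>k\<in>K1 g i j.
         dl (j, n + of_nat k * dij g i j - dd g j) v - dl (j, n + dd g i + of_nat k * dij g i j - dd g j) v"
  let ?F4 = "\<lambda>v. \<Sum>j\<in>{j\<in>Sset g. j > i}. \<Sum>k\<in>K2 g i j.
         dl (j, n + of_nat k * dij g i j - dd g j) v - dl (j, n + dd g i + of_nat k * dij g i j - dd g j) v"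
  let ?F12 = "\<lambda>v. dl (i, n + dd g i) v - dl (i, n - dd g i) v"
  have f3: "finite {v. ?F3 v \<noteq> 0}" by (rule finI[OF fin_K1])
  have f4: "finite {v. ?F4 v \<noteq> 0}" by (rule finI[OF fin_K2])
  have f12: "finite {v. ?F12 v \<noteq> 0}" by (intro fin_diff fin_dl)
  have "PP A (Rv g i n) = PP A (\<lambda>v. (?F12 v + ?F3 v) + ?F4 v)"
    unfolding Rv_def by simp
  also have "\<dots> = PP A (\<lambda>v. ?F12 v + ?F3 v) * PP A ?F4"
    by (rule PP_add[OF nz fin_add[OF f12 f3] f4])
  also have "PP A (\<lambda>v. ?F12 v + ?F3 v) = PP A ?F12 * PP A ?F3"
    by (rule PP_add[OF nz f12 f3])
  also have "PP A ?F12 = A (i, n + dd g i) / A (i, n - dd g i)"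
    by (simp add: PP_diff[OF nz fin_dl fin_dl] PP_dl)
  finally show ?thesis by (simp only: inner[OF fin_K1] inner[OF fin_K2])
qed

lemma p_star_PP: "p_star g A i n = PP (case_prod A) (eps g (i, n))"
proof -
  have "{v\<in>vertices g. eps g (i, n) v \<noteq> 0} = {v. eps g (i, n) v \<noteq> 0}"
    by (auto simp: eps_def arrows_def)
  then show ?thesis unfolding p_star_def PP_def by (simp add: case_prod_beta)
qed

lemma prod_nz: "(\<And>a. a \<in> S \<Longrightarrow> f a \<noteq> 0) \<Longrightarrow> prod f S \<noteq> (0::'a::field)"
  by (cases "finite S") auto

lemma reduce:
  assumes nz: "\<forall>j m. A j m \<noteq> 0"
    and E: "\<And>v. eps g (i, n) v = Rv g i n v"
  shows "p_tau g (phi_subst g A) i n = p_star g A i n"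
proof -
  have nz': "\<forall>v. case_prod A v \<noteq> 0" using nz by auto
  have "p_star g A i n = PP (case_prod A) (Rv g i n)"
    unfolding p_star_PP using E by metis
  also note PP_Rv[OF nz']
  finally have ps: "p_star g A i n = A i (n + dd g i) / A i (n - dd g i)
    * ((\<Prod>j\<in>{j\<in>Sset g. j < i}. \<Prod>k\<in>K1 g i j. A j (n + of_nat k * dij g i j - dd g j))
       / (\<Prod>j\<in>{j\<in>Sset g. j < i}. \<Prod>k\<in>K1 g i j. A j (n + dd g i + of_nat k * dij g i j - dd g j)))
    * ((\<Prod>j\<in>{j\<in>Sset g. j > i}. \<Prod>k\<in>K2 g i j. A j (n + of_nat k * dij g i j - dd g j))
       / (\<Prod>j\<in>{j\<in>Sset g. j > i}. \<Prod>k\<in>K2 g i j. A j (n + dd g i + of_nat k * dij g i j - dd g j)))"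
    by simp
  have T: "Tfun g (phi_subst g A) i x =
     (\<Prod>j\<in>{j\<in>Sset g. j < i}. \<Prod>k\<in>K1 g i j. A j (x + of_nat k * dij g i j - dd g j))
   * (\<Prod>j\<in>{j\<in>Sset g. j > i}. \<Prod>k\<in>K2 g i j. A j (x + of_nat k * dij g i j - dd g j))" for x
    unfolding Tfun_def K1_def K2_def phi_subst_def by simp
  have nzp: "(\<Prod>j\<in>J. \<Prod>k\<in>K j. A j (f j k)) \<noteq> 0" for J K f
    using nz by (intro prod_nz) auto
  show ?thesis
    unfolding ps p_tau_def sfun_def T
    using nz nzp by (simp add: phi_subst_def field_simps)
qed



definition Rf :: "lie_type \<Rightarrow> nat \<Rightarrow> rat \<Rightarrow> nat \<Rightarrow> rat \<Rightarrow> int" where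
  "Rf g i n j m = of_bool (j = i \<and> m = n + dd g i) - of_bool (j = i \<and> m = n - dd g i)
    + (if j < i then \<Sum>k\<in>K1 g i j. of_bool (m = n + of_nat k * dij g i j - dd g j)
                                  - of_bool (m = n + dd g i + of_nat k * dij g i j - dd g j) else 0)
    + (if i < j then \<Sum>k\<in>K2 g i j. of_bool (m = n + of_nat k * dij g i j - dd g j)
                                  - of_bool (m = n + dd g i + of_nat k * dij g i j - dd g j) else 0)"

lemma sum_delta_j:
  assumes "finite J"
  shows "(\<Sum>j'\<in>J. \<Sum>k\<in>K j'. dl (j', a j' k) (j, m) - dl (j', b j' k) (j, m))
     = (if j \<in> J then \<Sum>k\<in>K j. of_bool (m = a j k) - of_bool (m = b j k) else 0)"
proof -
  have "(\<Sum>j'\<in>J. \<Sum>k\<in>K j'. dl (j', a j' k) (j, m) - dl (j', b j' k) (j, m))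
      = (\<Sum>j'\<in>J. if j = j' then (\<Sum>k\<in>K j. of_bool (m = a j k) - of_bool (m = b j k)) else 0)"
    by (intro sum.cong refl) (auto simp: dl_def of_bool_def)
  also have "\<dots> = (if j \<in> J then \<Sum>k\<in>K j. of_bool (m = a j k) - of_bool (m = b j k) else 0)"
    using assms by (simp add: sum.delta)
  finally show ?thesis .
qed

lemma Rv_Rf:
  assumes "i \<in> Sset g"
  shows "Rv g i n (j, m) = (if j \<in> Sset g then Rf g i n j m else 0)"
  unfolding Rv_def Rf_def
  apply (simp only: sum_delta_j fin_Sset)
  using assms by (auto simp: dl_def)

lemma dZ_add: assumes "x \<in> dZ g" "y \<in> dZ g" shows "x + y \<in> dZ g"
proof -
  obtain a b where "x = of_int a * dmin g" "y = of_int b * dmin g" using assms unfolding dZ_def by auto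
  then have "x + y = of_int (a + b) * dmin g" by (simp add: distrib_right)
  then show ?thesis unfolding dZ_def by blast
qed
lemma dZ_diff: assumes "x \<in> dZ g" "y \<in> dZ g" shows "x - y \<in> dZ g"
proof -
  obtain a b where "x = of_int a * dmin g" "y = of_int b * dmin g" using assms unfolding dZ_def by auto
  then have "x - y = of_int (a - b) * dmin g" by (simp add: left_diff_distrib)
  then show ?thesis unfolding dZ_def by blast
qed
lemma dZ_mult: assumes "x \<in> dZ g" shows "of_nat k * x \<in> dZ g"
proof -
  obtain a where "x = of_int a * dmin g" using assms unfolding dZ_def by auto
  then have "of_nat k * x = of_int (int k * a) * dmin g" by simp
  then show ?thesis unfolding dZ_def by blast
qed

lemma Rf_out:
  assumes dd: "\<forall>j\<in>Sset g. dd g j \<in> dZ g" and i: "i \<in> Sset g" and j: "j \<in> Sset g"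
    and n: "n \<in> dZ g" and m: "m \<notin> dZ g"
  shows "Rf g i n j m = 0"
proof -
  have di: "dd g i \<in> dZ g" and dj: "dd g j \<in> dZ g" using dd i j by auto
  have dij: "dij g i j \<in> dZ g" unfolding dij_def using di dj by (simp add: min_def)
  have "m \<noteq> n + dd g i" "m \<noteq> n - dd g i"
    "\<And>k. m \<noteq> n + of_nat k * dij g i j - dd g j"
    "\<And>k. m \<noteq> n + dd g i + of_nat k * dij g i j - dd g j"
    using m n di dj dij dZ_add dZ_diff dZ_mult by metis+
  then show ?thesis unfolding Rf_def by simp
qed

lemma eps_eq:
  assumes i: "i \<in> Sset g" and n: "n \<in> dZ g"
  shows "eps g (i, n) (j, m) = (if j \<in> Sset g \<and> m \<in> dZ g
     then int (arrows_raw g i n j m) - int (arrows_raw g j m i n) else 0)"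
  using assms by (auto simp: eps_def arrows_def vertices_def)

lemma reduce2:
  assumes dd: "\<forall>j\<in>Sset g. dd g j \<in> dZ g"
    and raw: "\<And>i j n m. i \<in> Sset g \<Longrightarrow> j \<in> Sset g \<Longrightarrow>
        int (arrows_raw g i n j m) - int (arrows_raw g j m i n) = Rf g i n j m"
    and i: "i \<in> Sset g" and n: "n \<in> dZ g"
  shows "eps g (i, n) v = Rv g i n v"
proof (cases v)
  case (Pair j m)
  show ?thesis unfolding Pair eps_eq[OF i n] Rv_Rf[OF i]
    using raw[OF i] Rf_out[OF dd i _ n] by auto
qed

lemma K1N: "-cartan g i j = of_nat N \<Longrightarrow> K1 g i j = {1..N}"
  unfolding K1_def by auto
lemma K2N: "-cartan g i j = of_nat N \<Longrightarrow> K2 g i j = {..<N}"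
proof -
  assume h: "-cartan g i j = of_nat N"
  have "(rat_of_nat k \<le> of_nat N - 1) = (k < N)" for k
  proof -
    have "(rat_of_nat k \<le> of_nat N - 1) = (rat_of_nat (k + 1) \<le> of_nat N)" by (simp add: algebra_simps)
    also have "\<dots> = (k + 1 \<le> N)" by (rule of_nat_le_iff)
    finally show ?thesis by linarith
  qed
  then show ?thesis unfolding K2_def h by auto
qed

lemma K_vals:
  "cartan g i j = 0 \<Longrightarrow> K1 g i j = {} \<and> K2 g i j = {}"
  "cartan g i j = -1 \<Longrightarrow> K1 g i j = {1} \<and> K2 g i j = {0}"
  "cartan g i j = -2 \<Longrightarrow> K1 g i j = {1,2} \<and> K2 g i j = {0,1}"
  "cartan g i j = -3 \<Longrightarrow> K1 g i j = {1,2,3} \<and> K2 g i j = {0,1,2}"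
proof -
  assume "cartan g i j = 0"
  then have "-cartan g i j = of_nat 0" by simp
  from K1N[OF this] K2N[OF this] show "K1 g i j = {} \<and> K2 g i j = {}" by auto
next
  assume "cartan g i j = -1"
  then have "-cartan g i j = of_nat 1" by simp
  from K1N[OF this] K2N[OF this] show "K1 g i j = {1} \<and> K2 g i j = {0}" by auto
next
  assume "cartan g i j = -2"
  then have "-cartan g i j = of_nat 2" by simp
  from K1N[OF this] K2N[OF this] show "K1 g i j = {1,2} \<and> K2 g i j = {0,1}" by auto
next
  assume "cartan g i j = -3"
  then have "-cartan g i j = of_nat 3" by simp
  from K1N[OF this] K2N[OF this] show "K1 g i j = {1,2,3} \<and> K2 g i j = {0,1,2}" by auto
qed



lemma adj_sym: "dynkin_adj g a b = dynkin_adj g b a"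
  by (cases g) (simp_all add: min.commute max.commute)

lemma SL_raw:
  assumes raw: "\<And>a p b q. arrows_raw g a p b q = of_bool (b = a \<and> q = p + 1)
        + of_bool (dynkin_adj g a b \<and> a > b \<and> q = p) + of_bool (dynkin_adj g a b \<and> b > a \<and> p = q + 1)"
    and d1: "\<And>j. dd g j = 1"
    and irr: "\<And>a. \<not> dynkin_adj g a a"
  shows "int (arrows_raw g i n j m) - int (arrows_raw g j m i n) = Rf g i n j m"
proof -
  have dij: "dij g i j = 1" by (simp add: dij_def d1)
  consider "i = j" | "j < i" "dynkin_adj g i j" | "j < i" "\<not> dynkin_adj g i j"
     | "i < j" "dynkin_adj g i j" | "i < j" "\<not> dynkin_adj g i j" by linarith
  then show ?thesis
  proof cases
    case 1 then show ?thesis by (simp add: raw Rf_def d1 irr of_bool_def)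
  next
    case 2
    then have "cartan g i j = -1" by (simp add: cartan_def root_ip_def d1)
    then show ?thesis using 2 by (simp add: raw Rf_def d1 dij K_vals adj_sym[of g j i] of_bool_def)
  next
    case 3
    then have "cartan g i j = 0" by (simp add: cartan_def root_ip_def d1)
    then show ?thesis using 3 by (simp add: raw Rf_def d1 dij K_vals adj_sym[of g j i] of_bool_def)
  next
    case 4
    then have "cartan g i j = -1" by (simp add: cartan_def root_ip_def d1)
    then show ?thesis using 4 by (simp add: raw Rf_def d1 dij K_vals adj_sym[of g j i] of_bool_def)
  next
    case 5
    then have "cartan g i j = 0" by (simp add: cartan_def root_ip_def d1)
    then show ?thesis using 5 by (simp add: raw Rf_def d1 dij K_vals adj_sym[of g j i] of_bool_def)
  qed
qed



lemma B_raw: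
  assumes l: "l \<ge> 2" and i: "1 \<le> i" "i \<le> l" and j: "1 \<le> j" "j \<le> l"
  shows "int (arrows_raw (TB l) i n j m) - int (arrows_raw (TB l) j m i n) = Rf (TB l) i n j m"
proof -
  consider "i = j" "i = l" | "i = j" "i < l" | "j = i + 1" "j = l" | "j = i + 1" "j < l"
    | "i = j + 1" "i = l" | "i = j + 1" "i < l" | "j + 2 \<le> i" | "i + 2 \<le> j"
    using i j by linarith
  then show ?thesis
  proof cases
    case 1 then show ?thesis using l i j by (auto simp add: Rf_def of_bool_def)
  next
    case 2 then show ?thesis using l i j by (auto simp add: Rf_def of_bool_def)
  next
    case 3
    then have "cartan (TB l) i j = -1" using l i j by (simp add: cartan_def root_ip_def)
    then show ?thesis using 3 l i j by (auto simp add: Rf_def of_bool_def K_vals dij_def)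
  next
    case 4
    then have "cartan (TB l) i j = -1" using l i j by (simp add: cartan_def root_ip_def)
    then show ?thesis using 4 l i j by (auto simp add: Rf_def of_bool_def K_vals dij_def)
  next
    case 5
    then have "cartan (TB l) i j = -2" using l i j by (simp add: cartan_def root_ip_def)
    then show ?thesis using 5 l i j by (auto simp add: Rf_def of_bool_def K_vals dij_def)
  next
    case 6
    then have "cartan (TB l) i j = -1" using l i j by (simp add: cartan_def root_ip_def)
    then show ?thesis using 6 l i j by (auto simp add: Rf_def of_bool_def K_vals dij_def)
  next
    case 7
    then have "cartan (TB l) i j = 0" using l i j by (simp add: cartan_def root_ip_def)
    then show ?thesis using 7 l i j by (auto simp add: Rf_def of_bool_def K_vals dij_def)
  next
    case 8
    then have "cartan (TB l) i j = 0" using l i j by (simp add: cartan_def root_ip_def)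
    then show ?thesis using 8 l i j by (auto simp add: Rf_def of_bool_def K_vals dij_def)
  qed
qed

lemma C_raw:
  assumes l: "l \<ge> 2" and i: "1 \<le> i" "i \<le> l" and j: "1 \<le> j" "j \<le> l"
  shows "int (arrows_raw (TC l) i n j m) - int (arrows_raw (TC l) j m i n) = Rf (TC l) i n j m"
proof -
  consider "i = j" "i = l" | "i = j" "i < l" | "j = i + 1" "j = l" | "j = i + 1" "j < l"
    | "i = j + 1" "i = l" | "i = j + 1" "i < l" | "j + 2 \<le> i" | "i + 2 \<le> j"
    using i j by linarith
  then show ?thesis
  proof cases
    case 1 then show ?thesis using l i j by (auto simp add: Rf_def of_bool_def)
  next
    case 2 then show ?thesis using l i j by (auto simp add: Rf_def of_bool_def)
  next
    case 3
    then have "cartan (TC l) i j = -2" using l i j by (simp add: cartan_def root_ip_def)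
    then show ?thesis using 3 l i j by (auto simp add: Rf_def of_bool_def K_vals dij_def)
  next
    case 4
    then have "cartan (TC l) i j = -1" using l i j by (simp add: cartan_def root_ip_def)
    then show ?thesis using 4 l i j by (auto simp add: Rf_def of_bool_def K_vals dij_def)
  next
    case 5
    then have "cartan (TC l) i j = -1" using l i j by (simp add: cartan_def root_ip_def)
    then show ?thesis using 5 l i j by (auto simp add: Rf_def of_bool_def K_vals dij_def)
  next
    case 6
    then have "cartan (TC l) i j = -1" using l i j by (simp add: cartan_def root_ip_def)
    then show ?thesis using 6 l i j by (auto simp add: Rf_def of_bool_def K_vals dij_def)
  next
    case 7
    then have "cartan (TC l) i j = 0" using l i j by (simp add: cartan_def root_ip_def)
    then show ?thesis using 7 l i j by (auto simp add: Rf_def of_bool_def K_vals dij_def)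
  next
    case 8
    then have "cartan (TC l) i j = 0" using l i j by (simp add: cartan_def root_ip_def)
    then show ?thesis using 8 l i j by (auto simp add: Rf_def of_bool_def K_vals dij_def)
  qed
qed



lemma K_simps:
  "cartan g i j = 0 \<Longrightarrow> K1 g i j = {}" "cartan g i j = 0 \<Longrightarrow> K2 g i j = {}"
  "cartan g i j = -1 \<Longrightarrow> K1 g i j = {1}" "cartan g i j = -1 \<Longrightarrow> K2 g i j = {0}"
  "cartan g i j = -2 \<Longrightarrow> K1 g i j = {1,2}" "cartan g i j = -2 \<Longrightarrow> K2 g i j = {0,1}"
  "cartan g i j = -3 \<Longrightarrow> K1 g i j = {1,2,3}" "cartan g i j = -3 \<Longrightarrow> K2 g i j = {0,1,2}"
  using K_vals by auto

lemma G2_raw: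
  assumes i: "i \<in> {1,2}" and j: "j \<in> {1,2}"
  shows "int (arrows_raw TG2 i n j m) - int (arrows_raw TG2 j m i n) = Rf TG2 i n j m"
  using i j apply (elim insertE emptyE)
  apply (simp_all add: Rf_def K_simps cartan_def root_ip_def dij_def)
  done

lemma F4_raw:
  assumes i: "i \<in> {1,2,3,4}" and j: "j \<in> {1,2,3,4}"
  shows "int (arrows_raw TF4 i n j m) - int (arrows_raw TF4 j m i n) = Rf TF4 i n j m"
  using i j apply (elim insertE emptyE)
  apply (simp_all add: Rf_def K_simps cartan_def root_ip_def dij_def)
  done



lemma dmin_props:
  assumes "Sset g \<noteq> {}"
  shows "\<exists>j0\<in>Sset g. dmin g = dd g j0" "\<And>j. j \<in> Sset g \<Longrightarrow> dmin g \<le> dd g j"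
proof -
  have fin: "finite (dd g ` Sset g)" by (simp add: Sset_def)
  have ne: "dd g ` Sset g \<noteq> {}" using assms by simp
  show "\<exists>j0\<in>Sset g. dmin g = dd g j0"
    using Min_in[OF fin ne] unfolding dmin_def by auto
  show "\<And>j. j \<in> Sset g \<Longrightarrow> dmin g \<le> dd g j"
    using Min_le[OF fin] unfolding dmin_def by auto
qed

lemma in_dZ: "x = of_int z * dmin g \<Longrightarrow> x \<in> dZ g"
  unfolding dZ_def by blast

lemma final:
  assumes dd: "\<forall>j\<in>Sset g. dd g j \<in> dZ g"
    and raw: "\<And>i j n m. i \<in> Sset g \<Longrightarrow> j \<in> Sset g \<Longrightarrow>
        int (arrows_raw g i n j m) - int (arrows_raw g j m i n) = Rf g i n j m"
  shows "\<forall>A :: nat \<Rightarrow> rat \<Rightarrow> complex. (\<forall>j m. A j m \<noteq> 0) \<longrightarrow>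
           (\<forall>i \<in> Sset g. \<forall>n \<in> dZ g. p_tau g (phi_subst g A) i n = p_star g A i n)"
  using reduce reduce2[OF dd raw] by blast

lemma dd_dZ_1:
  assumes "Sset g \<noteq> {}" "\<And>j. dd g j = 1"
  shows "\<forall>j\<in>Sset g. dd g j \<in> dZ g"
proof -
  have "dmin g = 1" using dmin_props(1)[OF assms(1)] assms(2) by auto
  then show ?thesis using assms(2) by (auto intro: in_dZ[of _ 1])
qed

theorem proposition5p5:
  fixes g :: lie_type
  assumes "valid_type g"
  shows "\<forall>A :: nat \<Rightarrow> rat \<Rightarrow> complex. (\<forall>j m. A j m \<noteq> 0) \<longrightarrow>
           (\<forall>i \<in> Sset g. \<forall>n \<in> dZ g. p_tau g (phi_subst g A) i n = p_star g A i n)"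
proof (cases g)
  case (TA l)
  then have l: "l \<ge> 1" using assms by simp
  have ne: "Sset g \<noteq> {}" using l TA by (simp add: Sset_def)
  show ?thesis unfolding TA
    apply (rule final)
     apply (rule dd_dZ_1) using ne TA apply simp_all[2]
    apply (rule SL_raw) apply simp_all
    done
next
  case (TD l)
  then have l: "l \<ge> 4" using assms by simp
  have ne: "Sset g \<noteq> {}" using l TD by (simp add: Sset_def)
  show ?thesis unfolding TD
    apply (rule final)
     apply (rule dd_dZ_1) using ne TD apply simp_all[2]
    apply (rule SL_raw) using l apply auto
    done
next
  case (TE l)
  then have l: "l \<ge> 6" using assms by auto
  have ne: "Sset g \<noteq> {}" using l TE by (simp add: Sset_def)
  show ?thesis unfolding TE
    apply (rule final)
     apply (rule dd_dZ_1) using ne TE apply simp_all[2]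
    apply (rule SL_raw) using l apply simp_all
    done
next
  case (TB l)
  then have l: "l \<ge> 2" using assms by simp
  have ne: "Sset g \<noteq> {}" using l TB by (simp add: Sset_def)
  obtain j0 where j0: "j0 \<in> Sset g" "dmin g = dd g j0" using dmin_props(1)[OF ne] by blast
  have "dmin g \<le> dd g l" using dmin_props(2)[OF ne, of l] l TB by (simp add: Sset_def)
  then have dm: "dmin (TB l) = 1/2" using j0 TB by (auto split: if_splits)
  have dd: "\<forall>j\<in>Sset g. dd g j \<in> dZ g"
  proof
    fix j assume "j \<in> Sset g"
    show "dd g j \<in> dZ g"
    proof (cases "j = l")
      case True then show ?thesis using TB dm by (auto intro: in_dZ[of _ 1])
    next
      case False then show ?thesis using TB dm by (auto intro: in_dZ[of _ 2])
    qed
  qed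
  show ?thesis unfolding TB
    apply (rule final)
    using dd TB apply simp
    apply (rule B_raw) using l apply (simp_all add: Sset_def)
    done
next
  case (TC l)
  then have l: "l \<ge> 2" using assms by simp
  have ne: "Sset g \<noteq> {}" using l TC by (simp add: Sset_def)
  obtain j0 where j0: "j0 \<in> Sset g" "dmin g = dd g j0" using dmin_props(1)[OF ne] by blast
  have "dmin g \<le> dd g 1" using dmin_props(2)[OF ne, of 1] l TC by (simp add: Sset_def)
  then have dm: "dmin (TC l) = 1" using j0 TC l by (auto split: if_splits)
  have dd: "\<forall>j\<in>Sset g. dd g j \<in> dZ g"
  proof
    fix j assume "j \<in> Sset g"
    show "dd g j \<in> dZ g"
    proof (cases "j = l")
      case True then show ?thesis using TC dm by (auto intro: in_dZ[of _ 2])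
    next
      case False then show ?thesis using TC dm by (auto intro: in_dZ[of _ 1])
    qed
  qed
  show ?thesis unfolding TC
    apply (rule final)
    using dd TC apply simp
    apply (rule C_raw) using l apply (simp_all add: Sset_def)
    done
next
  case TF4
  have ne: "Sset g \<noteq> {}" using TF4 by (simp add: Sset_def)
  obtain j0 where j0: "j0 \<in> Sset g" "dmin g = dd g j0" using dmin_props(1)[OF ne] by blast
  have "dmin g \<le> dd g 4" using dmin_props(2)[OF ne, of 4] TF4 by (simp add: Sset_def)
  then have dm: "dmin TF4 = 1/2" using j0 TF4 by (auto split: if_splits)
  have dd: "\<forall>j\<in>Sset g. dd g j \<in> dZ g"
  proof
    fix j assume "j \<in> Sset g"
    show "dd g j \<in> dZ g"
    proof (cases "j \<le> 2")
      case True then show ?thesis using TF4 dm by (auto intro: in_dZ[of _ 2])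
    next
      case False then show ?thesis using TF4 dm by (auto intro: in_dZ[of _ 1])
    qed
  qed
  show ?thesis unfolding TF4
    apply (rule final)
    using dd TF4 apply simp
    apply (rule F4_raw) apply (auto simp add: Sset_def)
    done
next
  case TG2
  have ne: "Sset g \<noteq> {}" using TG2 by (simp add: Sset_def)
  obtain j0 where j0: "j0 \<in> Sset g" "dmin g = dd g j0" using dmin_props(1)[OF ne] by blast
  have "dmin g \<le> dd g 1" using dmin_props(2)[OF ne, of 1] TG2 by (simp add: Sset_def)
  then have dm: "dmin TG2 = 1" using j0 TG2 by (auto split: if_splits)
  have dd: "\<forall>j\<in>Sset g. dd g j \<in> dZ g"
  proof
    fix j assume "j \<in> Sset g"
    show "dd g j \<in> dZ g"
    proof (cases "j = 1")
      case True then show ?thesis using TG2 dm by (auto intro: in_dZ[of _ 1])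
    next
      case False then show ?thesis using TG2 dm by (auto intro: in_dZ[of _ 3])
    qed
  qed
  show ?thesis unfolding TG2
    apply (rule final)
    using dd TG2 apply simp
    apply (rule G2_raw) apply (auto simp add: Sset_def)
    done
qed


end
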